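(* Let $\sigma>0$, $\eta>0$, $\hat\alpha>0$, $h>0$, $r\ge0$, $a\in\mathbb{R}$, and for $\beta\ge0$ let $v_\beta$ denote the unique $C^1[0,\infty)$ solution of $\frac{\sigma^2}2v'(y)=\beta+\frac{\hat\alpha}4v(y)^2+\eta y(v(y)-\frac h\eta)-av(y)$, $y\ge0$, $v(0)=-r$. Let $\underline\beta_2=-ar-\frac{\hat\alpha r^2}4$. If either $a>-\frac{\hat\alpha}4r$ and $\beta\in\mathcal D_1$, or $a\le-\frac{\hat\alpha}4r$ and $\beta\in\mathcal D_2$, then $\lim_{x\to\infty}v_\beta(x)=-\infty$.
   Context: $\mathcal D_1=\{\beta\ge0:\exists x_\beta\ge0$ such that $v_\beta$ is nondecreasing on $(0,x_\beta)$ and decreasing on $(x_\beta,\infty)\}$ and $\mathcal D_2=\{\beta>\underline\beta_2:\exists x_\beta\ge0$ such that $v_\beta$ is nondecreasing on $(0,x_\beta)$ and decreasing on $(x_\beta,\infty)\}$. *)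

theory Defs
  imports "HOL-Analysis.Analysis"
begin

text \<open>v is a C^1 solution on [0,oo) of
  (sigma^2/2) v'(y) = beta + (alpha/4) v(y)^2 + eta y (v(y) - h/eta) - a v(y),  v(0) = -r.
  (Differentiability within [0,oo) with derivative given by the right-hand side; continuity
  of the derivative then follows from the equation.)\<close>
definition is_v_sol :: "real \<Rightarrow> real \<Rightarrow> real \<Rightarrow> real \<Rightarrow> real \<Rightarrow> real \<Rightarrow> real \<Rightarrow> (real \<Rightarrow> real) \<Rightarrow> bool" where
  "is_v_sol \<sigma> \<eta> \<alpha> h r a \<beta> v \<longleftrightarrow>
     v 0 = - r \<and>
     (\<forall>y\<ge>0. (v has_real_derivative
        (2 / \<sigma>\<^sup>2) * (\<beta> + \<alpha> / 4 * (v y)\<^sup>2 + \<eta> * y * (v y - h / \<eta>) - a * v y))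
        (at y within {0..}))"

definition unimodal_shape :: "(real \<Rightarrow> real) \<Rightarrow> bool" where
  "unimodal_shape v \<longleftrightarrow> (\<exists>x\<ge>0. mono_on {0<..<x} v \<and>
      (\<forall>s t. x < s \<longrightarrow> s < t \<longrightarrow> v t < v s))"

end

theory Submission
  imports Defs
begin

theorem lemma13:
  fixes \<sigma> \<eta> \<alpha> h r a \<beta> :: real and v :: "real \<Rightarrow> real"
  assumes "\<sigma> > 0" "\<eta> > 0" "\<alpha> > 0" "h > 0" "r \<ge> 0"
    and "\<beta> \<ge> 0"
    and sol: "is_v_sol \<sigma> \<eta> \<alpha> h r a \<beta> v"
    and cases: "(a > - (\<alpha> / 4) * r \<and> unimodal_shape v) \<or>
                (a \<le> - (\<alpha> / 4) * r \<and> \<beta> > - a * r - \<alpha> * r\<^sup>2 / 4 \<and> unimodal_shape v)"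
  shows "filterlim v at_bot at_top"
proof -
  note pos = assms(1-6)
  obtain x0 where x0: "x0 \<ge> 0" "\<forall>s t. x0 < s \<longrightarrow> s < t \<longrightarrow> v t < v s"
    using cases unfolding unimodal_shape_def by blast
  define k where "k = 2 / \<sigma>\<^sup>2"
  define F where "F y = \<beta> + \<alpha> / 4 * (v y)\<^sup>2 + \<eta> * y * (v y - h / \<eta>) - a * v y" for y
  define L where "L = h / \<eta>"
  have kpos: "k > 0" using pos by (simp add: k_def)
  have Lpos: "L > 0" using pos by (simp add: L_def)
  have D: "(v has_real_derivative k * F y) (at y within {0..})" if "y \<ge> 0" for y
    using sol that by (simp add: is_v_sol_def k_def F_def)
  have Dat: "(v has_real_derivative k * F y) (at y)" if "y > 0" for y
  proof -
    have "y \<in> interior {0..}" using that by simp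
    then show ?thesis using D[of y] that at_within_interior[of y "{0..}"] by simp
  qed
  have v0: "v 0 = - r" using sol by (simp add: is_v_sol_def)
  have Fle: "F y \<le> 0" if y: "y > x0" for y
  proof (rule ccontr)
    assume "\<not> F y \<le> 0"
    then have "k * F y > 0" using kpos by simp
    from DERIV_pos_inc_right[OF Dat this] obtain d where d: "d > 0" "\<forall>h>0. h < d \<longrightarrow> v y < v (y + h)"
      using x0 y by auto
    then have "v y < v (y + d/2)" by simp
    moreover have "v (y + d/2) < v y" using x0(2) y d by simp
    ultimately show False by simp
  qed
  have main: False if M: "\<forall>z>x0. v z > M" for M
  proof -
    have above: "v y > L" if y: "y > x0" for y
    proof (rule ccontr)
      assume nl: "\<not> v y > L"
      define y1 where "y1 = y + 1"
      have vy1: "v y1 < v y" using x0 y by (simp add: y1_def)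
      define \<epsilon> where "\<epsilon> = L - v y1"
      have epos: "\<epsilon> > 0" using nl vy1 by (simp add: \<epsilon>_def)
      define B where "B = \<beta> + \<alpha> / 4 * (M\<^sup>2 + L\<^sup>2) + \<bar>a\<bar> * (\<bar>M\<bar> + \<bar>L\<bar>)"
      have vb: "M < v z \<and> v z \<le> v y1" if "z \<ge> y1" for z
        proof (cases "z = y1")
          case False
          then have "v z < v y1" using that x0 y by (simp add: y1_def)
          then show ?thesis using that x0 y M by (simp add: y1_def)
        qed (use that x0 y M in \<open>auto simp: y1_def\<close>)
      have Fb: "F z \<le> B - \<eta> * z * \<epsilon>" if z: "z \<ge> y1" for z
      proof -
        have b1: "M < v z" "v z \<le> L - \<epsilon>" using vb[OF z] by (auto simp: \<epsilon>_def)
        have sq: "(v z)\<^sup>2 \<le> M\<^sup>2 + L\<^sup>2"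
        proof (cases "v z \<ge> 0")
          case True
          then have "(v z)\<^sup>2 \<le> L\<^sup>2" using b1 epos by (intro power_mono) auto
          then show ?thesis by (simp add: add_increasing)
        next
          case False
          then have "(- v z)\<^sup>2 \<le> (- M)\<^sup>2" using b1 by (intro power_mono) auto
          then show ?thesis by (simp add: add_increasing2)
        qed
        have ab: "\<bar>v z\<bar> \<le> \<bar>M\<bar> + \<bar>L\<bar>" using b1 epos by auto
        have t2: "- a * v z \<le> \<bar>a\<bar> * (\<bar>M\<bar> + \<bar>L\<bar>)"
        proof -
          have "- a * v z \<le> \<bar>a\<bar> * \<bar>v z\<bar>" by (metis abs_ge_self abs_minus_cancel abs_mult)
          also have "\<dots> \<le> \<bar>a\<bar> * (\<bar>M\<bar> + \<bar>L\<bar>)" using ab by (simp add: mult_left_mono)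
          finally show ?thesis .
        qed
        have zpos: "z \<ge> 0" using z x0 y by (simp add: y1_def)
        have t3: "\<eta> * z * (v z - h / \<eta>) \<le> \<eta> * z * (- \<epsilon>)"
          using b1 zpos pos by (intro mult_left_mono) (auto simp: L_def)
        have t1: "\<alpha> / 4 * (v z)\<^sup>2 \<le> \<alpha> / 4 * (M\<^sup>2 + L\<^sup>2)" using sq pos by simp
        show ?thesis using t1 t2 t3 unfolding F_def B_def by simp
      qed
      define Y where "Y = max y1 ((B + 1) / (\<eta> * \<epsilon>))"
      have Fneg: "F z \<le> -1" if z: "z \<ge> Y" for z
      proof -
        have "(B + 1) / (\<eta> * \<epsilon>) \<le> z" using z by (simp add: Y_def)
        then have "B + 1 \<le> z * (\<eta> * \<epsilon>)" using pos epos by (simp add: divide_le_eq)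
        then show ?thesis using Fb[of z] z by (simp add: Y_def algebra_simps)
      qed
      have Ypos: "Y > 0" using x0 y by (simp add: Y_def y1_def)
      define g where "g z = v z + k * z" for z
      define t where "t = (v Y - M) / k + 1"
      have vY: "v Y > M" using M Ypos x0 y by (simp add: Y_def y1_def)
      have tpos: "t \<ge> 0" using vY kpos by (simp add: t_def)
      have gd: "\<exists>y. (g has_real_derivative y) (at z) \<and> y \<le> 0" if z: "Y \<le> z" "z \<le> Y + t" for z
      proof -
        have "(g has_real_derivative k * F z + k) (at z)"
          unfolding g_def using Dat[of z] z Ypos
          by (auto intro!: derivative_eq_intros)
        moreover have "k * F z + k \<le> 0"
        proof -
          have "k * F z \<le> k * (-1)" using Fneg[OF z(1)] kpos by (intro mult_left_mono) auto
          then show ?thesis by simp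
        qed
        ultimately show ?thesis by blast
      qed
      have "g (Y + t) \<le> g Y"
        using DERIV_nonpos_imp_nonincreasing[of Y "Y + t" g] tpos gd by simp
      then have "v (Y + t) \<le> v Y - k * t" by (simp add: g_def algebra_simps)
      also have "k * t = v Y - M + k" using kpos by (simp add: t_def field_simps)
      finally have "v (Y + t) < M" using kpos by simp
      moreover have "v (Y + t) > M" using M Ypos tpos x0 y by (simp add: Y_def y1_def)
      ultimately show False by simp
    qed
    define c0 where "c0 = \<beta> + \<alpha> / 4 * L\<^sup>2 - a * L"
    have Fid: "F y = c0 + (v y - L) * (\<alpha> / 4 * (v y + L) - a + \<eta> * y)" for y
      using pos unfolding F_def c0_def L_def by (simp add: field_simps power2_eq_square)
    show False
    proof (cases "c0 \<ge> 0")
      case True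
      define y where "y = max x0 (a / \<eta>) + 1"
      have yx: "y > x0" by (simp add: y_def)
      have "y > a / \<eta>" by (simp add: y_def)
      then have "\<eta> * y > \<eta> * (a / \<eta>)" using pos by (intro mult_strict_left_mono) auto
      then have ay: "\<eta> * y > a" using pos by simp
      have vL: "v y > L" using above yx .
      have "\<alpha> / 4 * (v y + L) > 0" using vL Lpos pos by simp
      then have "(v y - L) * (\<alpha> / 4 * (v y + L) - a + \<eta> * y) > 0" using vL ay by simp
      then have "F y > 0" using True Fid[of y] by simp
      then show False using Fle[OF yx] by simp
    next
      case False
      define S where "S = {y. 0 \<le> y \<and> y \<le> x0 + 1 \<and> v y \<le> L}"
      define y1 where "y1 = Sup S"
      have S0: "0 \<in> S" using v0 pos Lpos x0(1) by (simp add: S_def)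
      have bdd: "bdd_above S" unfolding S_def by (rule bdd_aboveI[of _ "x0+1"]) auto
      have y1ge: "y1 \<ge> 0" using cSup_upper[OF S0 bdd] by (simp add: y1_def)
      have gt: "v z > L" if z: "z > y1" for z
      proof (cases "z \<le> x0 + 1")
        case True
        have "z \<notin> S" using cSup_upper[OF _ bdd, of z] z by (auto simp: y1_def)
        then show ?thesis using True z y1ge by (auto simp: S_def)
      next
        case False
        then show ?thesis using above by simp
      qed
      have cont: "continuous (at y1 within {0..}) v" using DERIV_continuous[OF D[OF y1ge]] .
      have ge: "v y1 \<ge> L"
      proof (rule ccontr)
        assume "\<not> v y1 \<ge> L"
        then have e: "L - v y1 > 0" by simp
        from cont[unfolded continuous_within_eps_delta, rule_format, OF e]
        obtain d where d: "d > 0" "\<forall>x'\<in>{0..}. dist x' y1 < d \<longrightarrow> dist (v x') (v y1) < L - v y1"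
          by blast
        have "dist (v (y1 + d/2)) (v y1) < L - v y1" using d y1ge by (auto simp: dist_real_def)
        moreover have "v (y1 + d/2) > L" using gt d by simp
        ultimately show False by (simp add: dist_real_def)
      qed
      have le: "v y1 \<le> L"
      proof (rule ccontr)
        assume "\<not> v y1 \<le> L"
        then have e: "v y1 - L > 0" by simp
        from cont[unfolded continuous_within_eps_delta, rule_format, OF e]
        obtain d where d: "d > 0" "\<forall>x'\<in>{0..}. dist x' y1 < d \<longrightarrow> dist (v x') (v y1) < v y1 - L"
          by blast
        have "y1 - d < Sup S" using d by (simp add: y1_def)
        then obtain s where s: "s \<in> S" "y1 - d < s" using less_cSup_iff[OF _ bdd] S0 by blast
        have "s \<le> y1" using cSup_upper[OF s(1) bdd] by (simp add: y1_def)
        then have "dist (v s) (v y1) < v y1 - L" using d s by (auto simp: dist_real_def S_def)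
        moreover have "v s \<le> L" using s by (simp add: S_def)
        ultimately show False by (simp add: dist_real_def)
      qed
      have "F y1 = c0" using Fid[of y1] ge le by simp
      then have neg: "k * F y1 < 0" using False kpos by (simp add: mult_pos_neg)
      have "((\<lambda>z. (v z - v y1) / (z - y1)) \<longlongrightarrow> k * F y1) (at y1 within {0..})"
        using D[OF y1ge] by (simp add: has_field_derivative_iff)
      from order_tendstoD(2)[OF this neg]
      obtain d where d: "d > 0" "\<forall>z\<in>{0..}. z \<noteq> y1 \<and> dist z y1 < d \<longrightarrow> (v z - v y1) / (z - y1) < 0"
        unfolding eventually_at by blast
      have "(v (y1 + d/2) - v y1) / ((y1 + d/2) - y1) < 0"
        using d(2)[rule_format, of "y1 + d/2"] d(1) y1ge by (simp add: dist_real_def)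
      moreover have "v (y1 + d/2) - v y1 > 0" using gt[of "y1 + d/2"] d ge le by simp
      ultimately show False using d by (simp add: divide_less_0_iff)
    qed
  qed
  show ?thesis
    unfolding filterlim_at_bot
  proof
    fix Z
    show "eventually (\<lambda>y. v y \<le> Z) at_top"
    proof (cases "\<exists>z>x0. v z \<le> Z")
      case True
      then obtain z where z: "z > x0" "v z \<le> Z" by blast
      have vyZ: "v y \<le> Z" if "y \<ge> z" for y
      proof (cases "y = z")
        case False
        then have "z < y" using that by simp
        then have "v y < v z" using x0(2)[rule_format, OF z(1)] by simp
        then show ?thesis using z(2) by linarith
      next
        case True
        then show ?thesis using z(2) by blast
      qed
      show ?thesis unfolding eventually_at_top_linorder
        by (rule exI[of _ z]) (simp add: vyZ)
    next
      case False
      then have "\<forall>z>x0. v z > Z" by auto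
      from main[OF this] show ?thesis by (rule FalseE)
    qed
  qed
qed

end
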